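(* For any (reachable) CCSK process $X$ and any $e_1,e_2\in\mathrm{ev}(X)$: $e_1\le e_2$ if and only if $\mathrm{key}(e_1)\le_X\mathrm{key}(e_2)$.
   Context: Names $\mathsf N$ with bijection $\overline\cdot$ onto disjoint co-names; $\mathsf L=\mathsf N\cup\overline{\mathsf N}\cup\{\tau\}$ ($\alpha$ over $\mathsf L$, $\lambda$ over $\mathsf L\setminus\{\tau\}$); keys $\mathsf K$ denumerable. CCSK processes $X::=\mathbf 0\mid\alpha.X\mid X\backslash\lambda\mid X+Y\mid X|Y\mid\alpha[k].X$; $\mathrm{keys}(X)$ keys in $X$; standard means no keys. Directions $D\in\{\mathrm L,\mathrm R\}$, $\bar{\mathrm L}=\mathrm R$, $\bar{\mathrm R}=\mathrm L$. Proof keyed labels $\theta::=\upsilon\alpha[k]\mid\upsilon\langle\upsilon_1\lambda[k],\upsilon_2\overline\lambda[k]\rangle$ ($\upsilon,\upsilon_i\in\{|_{\mathrm L},|_{\mathrm R},+_{\mathrm L},+_{\mathrm R}\}^*$), $\ell(\upsilon\alpha[k])=\alpha$, $\ell(\upsilon\langle\cdots\rangle)=\tau$, $\mathrm{key}(\theta)=k$. Forward CCSK$^{\mathrm P}$ transitions: least relation closed under (act) $\alpha.X\xrightarrow{\alpha[k]}\alpha[k].X$ if $\mathrm{keys}(X)=\emptyset$; (pre) $X\xrightarrow\theta X',\mathrm{key}(\theta)\ne k\Rightarrow\alpha[k].X\xrightarrow\theta\alpha[k].X'$; (res) $X\xrightarrow\theta X',\ell(\theta)\notin\{\lambda,\overline\lambda\}\Rightarrow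 X\backslash\lambda\xrightarrow\theta X'\backslash\lambda$; (par) $X\xrightarrow\theta X',\mathrm{key}(\theta)\notin\mathrm{keys}(Y)\Rightarrow X|Y\xrightarrow{|_{\mathrm L}\theta}X'|Y$, $Y|X\xrightarrow{|_{\mathrm R}\theta}Y|X'$; (syn) $X\xrightarrow{\upsilon_1\lambda[k]}X',Y\xrightarrow{\upsilon_2\overline\lambda[k]}Y'\Rightarrow X|Y\xrightarrow{\langle\upsilon_1\lambda[k],\upsilon_2\overline\lambda[k]\rangle}X'|Y'$; (sum) $X\xrightarrow\theta X',\mathrm{keys}(Y)=\emptyset\Rightarrow X+Y\xrightarrow{+_{\mathrm L}\theta}X'+Y$, $Y+X\xrightarrow{+_{\mathrm R}\theta}Y+X'$. Backward transitions are converses; $\bar t$ is the inverse of $t$. A path is a sequence of composable transitions; it is rooted if its source cannot perform a backward transition. $X$ is reachable if there is a path from a standard process to $X$. Transitions are connected if there is a path from the source of one to the target of the other. Independence $\iota$ on proof labels: least relation closed under (C1) $+_D\theta\mathrel\iota+_D\theta'$ if $\theta\mathrel\iota\theta'$; (P1) $|_D\theta\mathrel\iota|_D\theta'$ if $\theta\mathrel\iota\theta'$; (P2$_k$) $|_D\theta\mathrel\iota|_{\bar D}\theta'$ if keys differ; (S1) $|_D\theta\mathrel\iota\langle\theta_{\mathrm L},\theta_{\mathrm R}\rangle$ if $\theta\mathrel\iota\theta_D$; (S2) $\langle\theta_{\mathrm L},\theta_{\mathrm R}\rangle\mathrel\iota|_D\theta$ if $\theta_D\mathrel\iota\theta$;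 (S3) $\langle\theta_1,\theta_2\rangle\mathrel\iota\langle\theta_1',\theta_2'\rangle$ if $\theta_1\mathrel\iota\theta_1'$, $\theta_2\mathrel\iota\theta_2'$. On CCSK$^{\mathrm P}$ transitions $t\mathrel\iota u$ iff connected and labels $\iota$. Events: $\sim$ is the smallest equivalence on CCSK$^{\mathrm P}$ transitions with $t\sim t'$ whenever $t:P\to Q$, $u:P\to R$, $u':Q\to S$, $t':R\to S$ ($u'$ with label and direction of $u$, $t'$ of $t$) and $t\mathrel\iota u$; events are classes $[t]$, forward events are classes of forward transitions, $\bar e=[\bar t]$; all transitions of an event have the same key, denoted $\mathrm{key}(e)$. $\sharp(\varepsilon,e)=0$, $\sharp(tr,e)=\sharp(r,e)+1$ if $t\in e$, $\sharp(r,e)-1$ if $t\in\bar e$, else $\sharp(r,e)$. For forward events, $e\le e'$ iff every rooted path $r$ with $\sharp(r,e')>0$ has $\sharp(r,e)>0$. $\mathrm{ev}(X)$ is the set of forward events $e$ such that some rooted path $r$ with target $X$ has $\sharp(r,e)>0$. The partial order $\le_X$ on $\mathrm{keys}(X)$ is the reflexive transitive closure of $\mathrm{ord}(X)$, where $\mathrm{ord}(\mathbf 0)=\emptyset$, $\mathrm{ord}(\alpha.X)=\mathrm{ord}(X\backslash\lambda)=\mathrm{ord}(X)$, $\mathrm{ord}(X+Y)=\mathrm{ord}(X|Y)=\mathrm{ord}(X)\cup\mathrm{ord}(Y)$, and $\mathrm{ord}(\alpha[n].X)=\mathrm{ord}(X)\cup\{(n,k)\mid k\in\mathrm{keys}(X)\}$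 (pairs $(n,k)$ meaning $n<k$). *)

theory Defs
  imports Main
begin

datatype 'n lab = Nm 'n | CoNm 'n

fun cobar :: "'n lab \<Rightarrow> 'n lab" where
  "cobar (Nm a) = CoNm a"
| "cobar (CoNm a) = Nm a"

datatype 'n act = Vis "'n lab" | Tau

type_synonym key = nat

datatype 'n proc =
    Nil0
  | Pref "'n act" "'n proc"
  | Restr "'n proc" "'n lab"
  | Choice "'n proc" "'n proc"
  | Par "'n proc" "'n proc"
  | Keyed "'n act" key "'n proc"

fun keys :: "'n proc \<Rightarrow> key set" where
  "keys Nil0 = {}"
| "keys (Pref a X) = keys X"
| "keys (Restr X l) = keys X"
| "keys (Choice X Y) = keys X \<union> keys Y"
| "keys (Par X Y) = keys X \<union> keys Y"
| "keys (Keyed a k X) = insert k (keys X)"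

definition standard :: "'n proc \<Rightarrow> bool" where
  "standard X \<longleftrightarrow> keys X = {}"

datatype dir = DL | DR

fun dbar :: "dir \<Rightarrow> dir" where
  "dbar DL = DR"
| "dbar DR = DL"

datatype op = OPar dir | OSum dir

text \<open>Base a k is alpha[k]; Pfx p theta prepends p to the prefix string;
  Syn th1 th2 is the synchronisation label <th1, th2>.\<close>

datatype 'n plab = Base "'n act" key | Pfx op "'n plab" | Syn "'n plab" "'n plab"

fun pkey :: "'n plab \<Rightarrow> key" where
  "pkey (Base a k) = k"
| "pkey (Pfx p th) = pkey th"
| "pkey (Syn th1 th2) = pkey th1"

fun plbl :: "'n plab \<Rightarrow> 'n act" where
  "plbl (Base a k) = a"
| "plbl (Pfx p th) = plbl th"
| "plbl (Syn th1 th2) = Tau"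

inductive fwd :: "'n proc \<Rightarrow> 'n plab \<Rightarrow> 'n proc \<Rightarrow> bool" where
  act: "keys X = {} \<Longrightarrow> fwd (Pref a X) (Base a k) (Keyed a k X)"
| pre: "fwd X th X' \<Longrightarrow> pkey th \<noteq> k \<Longrightarrow> fwd (Keyed a k X) th (Keyed a k X')"
| res: "fwd X th X' \<Longrightarrow> plbl th \<noteq> Vis l \<Longrightarrow> plbl th \<noteq> Vis (cobar l)
        \<Longrightarrow> fwd (Restr X l) th (Restr X' l)"
| parL: "fwd X th X' \<Longrightarrow> pkey th \<notin> keys Y \<Longrightarrow> fwd (Par X Y) (Pfx (OPar DL) th) (Par X' Y)"
| parR: "fwd X th X' \<Longrightarrow> pkey th \<notin> keys Y \<Longrightarrow> fwd (Par Y X) (Pfx (OPar DR) th) (Par Y X')"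
| syn: "fwd X th1 X' \<Longrightarrow> fwd Y th2 Y' \<Longrightarrow> plbl th1 = Vis l \<Longrightarrow> plbl th2 = Vis (cobar l)
        \<Longrightarrow> pkey th1 = pkey th2 \<Longrightarrow> fwd (Par X Y) (Syn th1 th2) (Par X' Y')"
| sumL: "fwd X th X' \<Longrightarrow> keys Y = {} \<Longrightarrow> fwd (Choice X Y) (Pfx (OSum DL) th) (Choice X' Y)"
| sumR: "fwd X th X' \<Longrightarrow> keys Y = {} \<Longrightarrow> fwd (Choice Y X) (Pfx (OSum DR) th) (Choice Y X')"

text \<open>A transition (P, th, d, Q) goes from P to Q with label th; d = True means forward
  (fwd P th Q), d = False means backward (the converse: fwd Q th P).\<close>

type_synonym 'n trans = "'n proc \<times> 'n plab \<times> bool \<times> 'n proc"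

definition src :: "'n trans \<Rightarrow> 'n proc" where "src t = fst t"
definition tlab :: "'n trans \<Rightarrow> 'n plab" where "tlab t = fst (snd t)"
definition isfwd :: "'n trans \<Rightarrow> bool" where "isfwd t = fst (snd (snd t))"
definition tgt :: "'n trans \<Rightarrow> 'n proc" where "tgt t = snd (snd (snd t))"

definition is_trans :: "'n trans \<Rightarrow> bool" where
  "is_trans t \<longleftrightarrow> (if isfwd t then fwd (src t) (tlab t) (tgt t) else fwd (tgt t) (tlab t) (src t))"

definition tinv :: "'n trans \<Rightarrow> 'n trans" where
  "tinv t = (tgt t, tlab t, \<not> isfwd t, src t)"

inductive path :: "'n proc \<Rightarrow> 'n trans list \<Rightarrow> 'n proc \<Rightarrow> bool" where
  path_nil: "path P [] P"
| path_cons: "is_trans t \<Longrightarrow> src t = P \<Longrightarrow> path (tgt t) r Q \<Longrightarrow> path P (t # r) Q"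

definition root :: "'n proc \<Rightarrow> bool" where
  "root P \<longleftrightarrow> \<not> (\<exists>th P'. fwd P' th P)"

definition reachable :: "'n proc \<Rightarrow> bool" where
  "reachable X \<longleftrightarrow> (\<exists>P r. standard P \<and> path P r X)"

definition connected :: "'n trans \<Rightarrow> 'n trans \<Rightarrow> bool" where
  "connected t u \<longleftrightarrow> (\<exists>r. path (src t) r (tgt u)) \<or> (\<exists>r. path (src u) r (tgt t))"

inductive indep :: "'n plab \<Rightarrow> 'n plab \<Rightarrow> bool" where
  C1: "indep th th' \<Longrightarrow> indep (Pfx (OSum D) th) (Pfx (OSum D) th')"
| P1: "indep th th' \<Longrightarrow> indep (Pfx (OPar D) th) (Pfx (OPar D) th')"
| P2: "pkey th \<noteq> pkey th' \<Longrightarrow> indep (Pfx (OPar D) th) (Pfx (OPar (dbar D)) th')"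
| S1: "indep th (if D = DL then thL else thR) \<Longrightarrow> indep (Pfx (OPar D) th) (Syn thL thR)"
| S2: "indep (if D = DL then thL else thR) th \<Longrightarrow> indep (Syn thL thR) (Pfx (OPar D) th)"
| S3: "indep th1 th1' \<Longrightarrow> indep th2 th2' \<Longrightarrow> indep (Syn th1 th2) (Syn th1' th2')"

definition tindep :: "'n trans \<Rightarrow> 'n trans \<Rightarrow> bool" where
  "tindep t u \<longleftrightarrow> connected t u \<and> indep (tlab t) (tlab u)"

inductive sim :: "'n trans \<Rightarrow> 'n trans \<Rightarrow> bool" where
  sim_diamond: "t = (P, tht, dt, Q) \<Longrightarrow> u = (P, thu, du, R) \<Longrightarrow>
     u' = (Q, thu, du, S) \<Longrightarrow> t' = (R, tht, dt, S) \<Longrightarrow>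
     is_trans t \<Longrightarrow> is_trans u \<Longrightarrow> is_trans u' \<Longrightarrow> is_trans t' \<Longrightarrow>
     tindep t u \<Longrightarrow> sim t t'"
| sim_refl: "is_trans t \<Longrightarrow> sim t t"
| sim_sym: "sim t t' \<Longrightarrow> sim t' t"
| sim_trans: "sim t t' \<Longrightarrow> sim t' t'' \<Longrightarrow> sim t t''"

definition cls :: "'n trans \<Rightarrow> 'n trans set" where
  "cls t = {t'. sim t t'}"

definition fwd_event :: "'n trans set \<Rightarrow> bool" where
  "fwd_event e \<longleftrightarrow> (\<exists>t. is_trans t \<and> isfwd t \<and> e = cls t)"

definition ebar :: "'n trans set \<Rightarrow> 'n trans set" where
  "ebar e = cls (tinv (SOME t. t \<in> e))"

definition key_ev :: "'n trans set \<Rightarrow> key" where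
  "key_ev e = pkey (tlab (SOME t. t \<in> e))"

primrec sharp :: "'n trans list \<Rightarrow> 'n trans set \<Rightarrow> int" where
  "sharp [] e = 0"
| "sharp (t # r) e = sharp r e + (if t \<in> e then 1 else if t \<in> ebar e then -1 else 0)"

definition ev_le :: "'n trans set \<Rightarrow> 'n trans set \<Rightarrow> bool" where
  "ev_le e e' \<longleftrightarrow> (\<forall>P r Q. root P \<and> path P r Q \<and> sharp r e' > 0 \<longrightarrow> sharp r e > 0)"

definition ev :: "'n proc \<Rightarrow> 'n trans set set" where
  "ev X = {e. fwd_event e \<and> (\<exists>P r. root P \<and> path P r X \<and> sharp r e > 0)}"

fun ord :: "'n proc \<Rightarrow> (key \<times> key) set" where
  "ord Nil0 = {}"
| "ord (Pref a X) = ord X"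
| "ord (Restr X l) = ord X"
| "ord (Choice X Y) = ord X \<union> ord Y"
| "ord (Par X Y) = ord X \<union> ord Y"
| "ord (Keyed a n X) = ord X \<union> {(n, k) | k. k \<in> keys X}"

definition leX :: "'n proc \<Rightarrow> key \<Rightarrow> key \<Rightarrow> bool" where
  "leX X k1 k2 \<longleftrightarrow> k1 \<in> keys X \<and> k2 \<in> keys X \<and> (k1, k2) \<in> (ord X)\<^sup>*"

end

theory Submission
  imports Defs
begin

lemma ord_keys: "(a,b) \<in> ord P \<Longrightarrow> a \<in> keys P \<and> b \<in> keys P"
  by (induction P) auto

lemma finite_keys: "finite (keys P)"
  by (induction P) auto

lemma fwd_key_notin: "fwd P th Q \<Longrightarrow> pkey th \<notin> keys P"
  by (induction rule: fwd.induct) auto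

lemma fwd_keys: "fwd P th Q \<Longrightarrow> keys Q = insert (pkey th) (keys P)"
  by (induction rule: fwd.induct) auto

lemma fwd_key_in: "fwd P th Q \<Longrightarrow> pkey th \<in> keys Q"
  using fwd_keys by blast

lemma fwd_ord_mono: "fwd P th Q \<Longrightarrow> ord P \<subseteq> ord Q"
  by (induction rule: fwd.induct) (auto dest: fwd_keys)

lemma fwd_ord_new: "fwd P th Q \<Longrightarrow> ord Q \<subseteq> ord P \<union> {(y, pkey th) | y. True}"
  by (induction rule: fwd.induct) (auto dest: fwd_keys)

lemma fwd_ord_out: "fwd P th Q \<Longrightarrow> (pkey th, z) \<notin> ord Q"
  by (induction rule: fwd.induct) (auto dest: ord_keys)

lemma fwd_det: "fwd P th Q1 \<Longrightarrow> fwd P th Q2 \<Longrightarrow> Q1 = Q2"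
proof (induction arbitrary: Q2 rule: fwd.induct)
  case (act X a k) from act.prems show ?case by (cases rule: fwd.cases) auto
next
  case (pre X th X' k a) from pre.prems show ?case by (cases rule: fwd.cases) (auto intro: pre.IH)
next
  case (res X th X' l) from res.prems show ?case by (cases rule: fwd.cases) (auto intro: res.IH)
next
  case (parL X th X' Y) from parL.prems show ?case by (cases rule: fwd.cases) (auto intro: parL.IH)
next
  case (parR X th X' Y) from parR.prems show ?case by (cases rule: fwd.cases) (auto intro: parR.IH)
next
  case (syn X th1 X' Y th2 Y' l) from syn.prems show ?case by (cases rule: fwd.cases) (auto intro: syn.IH)
next
  case (sumL X th X' Y) from sumL.prems show ?case by (cases rule: fwd.cases) (auto intro: sumL.IH)
next
  case (sumR X th X' Y) from sumR.prems show ?case by (cases rule: fwd.cases) (auto intro: sumR.IH)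
qed

lemma fwd_bdet: "fwd A1 th1 B \<Longrightarrow> fwd A2 th2 B \<Longrightarrow> pkey th1 = pkey th2 \<Longrightarrow> th1 = th2 \<and> A1 = A2"
proof (induction arbitrary: A2 th2 rule: fwd.induct)
  case (act X a k) from act.prems act.hyps show ?case by (cases rule: fwd.cases) (auto dest: fwd_key_in)
next
  case (pre X th X' k a) from pre.prems pre.hyps show ?case by (cases rule: fwd.cases) (auto dest: pre.IH)
next
  case (res X th X' l) from res.prems show ?case by (cases rule: fwd.cases) (auto dest: res.IH)
next
  case (parL X th X' Y) from parL.prems parL.hyps show ?case
    by (cases rule: fwd.cases) (auto dest: parL.IH fwd_key_in)
next
  case (parR X th X' Y) from parR.prems parR.hyps show ?case
    by (cases rule: fwd.cases) (auto dest: parR.IH fwd_key_in)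
next
  case (syn X th1 X' Y th2 Y' l) from syn.prems syn.hyps show ?case
    by (cases rule: fwd.cases) (auto dest: syn.IH fwd_key_in)
next
  case (sumL X th X' Y) from sumL.prems sumL.hyps show ?case
    by (cases rule: fwd.cases) (auto dest: sumL.IH fwd_key_in)
next
  case (sumR X th X' Y) from sumR.prems sumR.hyps show ?case
    by (cases rule: fwd.cases) (auto dest: sumR.IH fwd_key_in)
qed

fun erase :: "'n proc \<Rightarrow> 'n proc" where
  "erase Nil0 = Nil0"
| "erase (Pref a X) = Pref a (erase X)"
| "erase (Restr X l) = Restr (erase X) l"
| "erase (Choice X Y) = Choice (erase X) (erase Y)"
| "erase (Par X Y) = Par (erase X) (erase Y)"
| "erase (Keyed a k X) = Pref a (erase X)"

fun proj :: "key set \<Rightarrow> 'n proc \<Rightarrow> 'n proc" where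
  "proj K Nil0 = Nil0"
| "proj K (Pref a X) = Pref a (proj K X)"
| "proj K (Restr X l) = Restr (proj K X) l"
| "proj K (Choice X Y) = Choice (proj K X) (proj K Y)"
| "proj K (Par X Y) = Par (proj K X) (proj K Y)"
| "proj K (Keyed a k X) = (if k \<in> K then Keyed a k (proj K X) else Pref a (erase X))"

definition dc :: "key set \<Rightarrow> (key \<times> key) set \<Rightarrow> bool" where
  "dc K R \<longleftrightarrow> (\<forall>a b. (a,b) \<in> R \<longrightarrow> b \<in> K \<longrightarrow> a \<in> K)"

lemma dc_mono: "dc K R' \<Longrightarrow> R \<subseteq> R' \<Longrightarrow> dc K R"
  unfolding dc_def by blast

lemma dc_rtrancl: assumes "dc K R" "(a,b) \<in> R\<^sup>*" "b \<in> K" shows "a \<in> K"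
  using assms(2,3)
proof (induction rule: converse_rtrancl_induct)
  case base then show ?case by simp
next
  case (step y z) then show ?case using assms(1) unfolding dc_def by blast
qed

lemma keys_erase[simp]: "keys (erase X) = {}"
  by (induction X) auto

lemma ord_erase[simp]: "ord (erase X) = {}"
  by (induction X) auto

lemma erase_std: "keys X = {} \<Longrightarrow> erase X = X"
  by (induction X) auto

lemma proj_std: "keys X \<subseteq> K \<Longrightarrow> proj K X = X"
  by (induction X) auto

lemma proj_erase[simp]: "proj K (erase X) = erase X"
  by (rule proj_std) simp

lemma erase_erase[simp]: "erase (erase X) = erase X"
  by (induction X) auto

lemma erase_proj[simp]: "erase (proj K X) = erase X"
  by (induction X) auto

lemma proj_proj: "proj A (proj B X) = proj (A \<inter> B) X"
  by (induction X) auto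

lemma keys_proj: "keys (proj K X) \<subseteq> K \<inter> keys X"
  by (induction X) auto

lemma keys_proj_dc: "dc K (ord X) \<Longrightarrow> keys (proj K X) = K \<inter> keys X"
proof (induction X)
  case (Keyed a k X)
  have d: "dc K (ord X)" using Keyed.prems by (auto intro: dc_mono)
  show ?case
  proof (cases "k \<in> K")
    case True then show ?thesis using Keyed.IH[OF d] by auto
  next
    case False
    have "\<forall>z \<in> keys X. z \<notin> K" using Keyed.prems False unfolding dc_def by auto
    then show ?thesis using False by auto
  qed
qed (auto intro: dc_mono)

lemma ord_proj_dc: "dc K (ord X) \<Longrightarrow> ord (proj K X) = ord X \<inter> (K \<times> K)"
proof (induction X)
  case (Keyed a k X)
  have d: "dc K (ord X)" using Keyed.prems by (auto intro: dc_mono)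
  show ?case
  proof (cases "k \<in> K")
    case True then show ?thesis using Keyed.IH[OF d] keys_proj_dc[OF d] by auto
  next
    case False
    have "\<forall>z \<in> keys X. z \<notin> K" using Keyed.prems False unfolding dc_def by auto
    then show ?thesis using False by (auto dest: ord_keys)
  qed
next
  case (Choice X Y)
  then show ?case by (auto intro: dc_mono)
next
  case (Par X Y)
  then show ?case by (auto intro: dc_mono)
qed auto

lemma proj_insert_notin: "k \<notin> keys X \<Longrightarrow> proj (insert k K) X = proj K X"
  by (induction X) auto

lemma fwd_erase: "fwd P th Q \<Longrightarrow> erase Q = erase P"
  by (induction rule: fwd.induct) auto

lemma proj_fwd: "fwd P th Q \<Longrightarrow> dc K (ord Q) \<Longrightarrow>
   (pkey th \<in> K \<longrightarrow> fwd (proj K P) th (proj K Q)) \<and> (pkey th \<notin> K \<longrightarrow> proj K P = proj K Q)"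
proof (induction rule: fwd.induct)
  case (act X a k)
  then show ?case by (auto simp: proj_std erase_std intro: fwd.act)
next
  case (pre X th X' k a)
  have d: "dc K (ord X')" using pre.prems by (auto intro: dc_mono)
  have kin: "pkey th \<in> keys X'" using pre.hyps(1) by (rule fwd_key_in)
  show ?case
  proof (intro conjI impI)
    assume "pkey th \<in> K"
    then have "k \<in> K" using pre.prems kin unfolding dc_def by auto
    then show "fwd (proj K (Keyed a k X)) th (proj K (Keyed a k X'))"
      using pre.IH[OF d] \<open>pkey th \<in> K\<close> pre.hyps(2) by (auto intro: fwd.pre)
  next
    assume "pkey th \<notin> K"
    then show "proj K (Keyed a k X) = proj K (Keyed a k X')"
      using pre.IH[OF d] fwd_erase[OF pre.hyps(1)] by auto
  qed
next
  case (res X th X' l)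
  then show ?case by (auto intro: fwd.res)
next
  case (parL X th X' Y)
  have d: "dc K (ord X')" "dc K (ord Y)" using parL.prems by (auto intro: dc_mono)
  show ?case using parL.IH[OF d(1)] parL.hyps keys_proj[of K Y] by (auto intro: fwd.parL)
next
  case (parR X th X' Y)
  have d: "dc K (ord X')" "dc K (ord Y)" using parR.prems by (auto intro: dc_mono)
  show ?case using parR.IH[OF d(1)] parR.hyps keys_proj[of K Y] by (auto intro: fwd.parR)
next
  case (syn X th1 X' Y th2 Y' l)
  have d: "dc K (ord X')" "dc K (ord Y')" using syn.prems by (auto intro: dc_mono)
  show ?case using syn.IH(1)[OF d(1)] syn.IH(2)[OF d(2)] syn.hyps by (auto intro: fwd.syn)
next
  case (sumL X th X' Y)
  have d: "dc K (ord X')" using sumL.prems by (auto intro: dc_mono)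
  show ?case using sumL.IH[OF d] sumL.hyps keys_proj[of K Y] by (auto intro: fwd.sumL)
next
  case (sumR X th X' Y)
  have d: "dc K (ord X')" using sumR.prems by (auto intro: dc_mono)
  show ?case using sumR.IH[OF d] sumR.hyps keys_proj[of K Y] by (auto intro: fwd.sumR)
qed

inductive FR :: "'n proc \<Rightarrow> bool" where
  FR_std: "keys S = {} \<Longrightarrow> FR S"
| FR_step: "FR P \<Longrightarrow> fwd P th Q \<Longrightarrow> FR Q"

lemma FR_proj: "FR Q \<Longrightarrow> dc K (ord Q) \<Longrightarrow> FR (proj K Q)"
proof (induction rule: FR.induct)
  case (FR_std S) then show ?case by (simp add: proj_std FR.FR_std)
next
  case (FR_step P th Q)
  have "dc K (ord P)" using FR_step.prems fwd_ord_mono[OF FR_step.hyps(2)] by (rule dc_mono)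
  then have "FR (proj K P)" by (rule FR_step.IH)
  then show ?case using proj_fwd[OF FR_step.hyps(2) FR_step.prems] by (auto intro: FR.FR_step)
qed

lemma proj_back: assumes "fwd P th Q" shows "proj (keys P) Q = P" "dc (keys P) (ord Q)"
proof -
  show d: "dc (keys P) (ord Q)"
    unfolding dc_def
  proof (intro allI impI)
    fix a b assume ab: "(a,b) \<in> ord Q" "b \<in> keys P"
    have "a \<in> keys Q" using ord_keys[OF ab(1)] by simp
    moreover have "a \<noteq> pkey th" using fwd_ord_out[OF assms] ab(1) by auto
    ultimately show "a \<in> keys P" using fwd_keys[OF assms] by auto
  qed
  have "proj (keys P) P = proj (keys P) Q"
    using proj_fwd[OF assms d] fwd_key_notin[OF assms] by auto
  then show "proj (keys P) Q = P" by (simp add: proj_std)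
qed

lemma FR_back: "FR Q \<Longrightarrow> fwd P th Q \<Longrightarrow> FR P"
  using FR_proj proj_back by metis

lemma root_FR: "FR P \<Longrightarrow> root P \<Longrightarrow> keys P = {}"
  by (cases rule: FR.cases) (auto simp: root_def)

lemma std_root: "keys P = {} \<Longrightarrow> root P"
  unfolding root_def using fwd_key_in by fastforce

lemma swap:
  "fwd A0 thl P \<Longrightarrow> fwd A1 thw A0 \<Longrightarrow> (pkey thw, pkey thl) \<notin> ord P \<Longrightarrow>
   \<exists>A'. fwd A1 thl A' \<and> fwd A' thw P \<and> indep thl thw"
proof (induction arbitrary: A1 thw rule: fwd.induct)
  case (act X a k)
  from act.prems(1) show ?case by (cases rule: fwd.cases)
next
  case (pre X thl X' k a)
  from pre.prems(1) show ?case
  proof (cases rule: fwd.cases)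
    case act
    then show ?thesis using pre.prems(2) fwd_key_in[OF pre.hyps(1)] by auto
  next
    case pre
    then obtain X1 where h: "fwd X1 thw X" "pkey thw \<noteq> k" "A1 = Keyed a k X1" by auto
    have "(pkey thw, pkey thl) \<notin> ord X'" using pre.prems(2) by auto
    from local.pre.IH[OF h(1) this] obtain A'' where "fwd X1 thl A''" "fwd A'' thw X'" "indep thl thw"
      by auto
    then show ?thesis using h local.pre.hyps(2)
      by (intro exI[of _ "Keyed a k A''"]) (auto intro: fwd.pre)
  qed (auto)?
next
  case (res X thl X' l)
  from res.prems(1) show ?case
  proof (cases rule: fwd.cases)
    case res
    then obtain X1 where h: "fwd X1 thw X" "A1 = Restr X1 l" "plbl thw \<noteq> Vis l" "plbl thw \<noteq> Vis (cobar l)" by auto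
    have "(pkey thw, pkey thl) \<notin> ord X'" using res.prems(2) by auto
    from local.res.IH[OF h(1) this] obtain A'' where "fwd X1 thl A''" "fwd A'' thw X'" "indep thl thw"
      by auto
    then show ?thesis using h local.res.hyps
      by (intro exI[of _ "Restr A'' l"]) (auto intro: fwd.res)
  qed (auto)?
next
  case (parL X thl X' Y)
  have kl: "pkey thl \<notin> keys X" using fwd_key_notin[OF parL.hyps(1)] .
  from parL.prems(1) show ?case
  proof (cases rule: fwd.cases)
    case parL
    then obtain X1 w where h: "fwd X1 w X" "A1 = Par X1 Y" "thw = Pfx (OPar DL) w" "pkey w \<notin> keys Y" by auto
    have "(pkey w, pkey thl) \<notin> ord X'" using parL.prems(2) h(3) by auto
    from local.parL.IH[OF h(1) this] obtain A'' where "fwd X1 thl A''" "fwd A'' w X'" "indep thl w"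
      by auto
    then show ?thesis using h local.parL.hyps
      by (intro exI[of _ "Par A'' Y"]) (auto intro: fwd.parL indep.P1)
  next
    case parR
    then obtain Y0 w where h: "fwd Y0 w Y" "A1 = Par X Y0" "thw = Pfx (OPar DR) w" "pkey w \<notin> keys X" by auto
    have kw: "pkey w \<in> keys Y" using fwd_key_in[OF h(1)] .
    have "keys Y0 \<subseteq> keys Y" using fwd_keys[OF h(1)] by auto
    then have s1: "fwd (Par X Y0) (Pfx (OPar DL) thl) (Par X' Y0)"
      using local.parL.hyps by (auto intro: fwd.parL)
    have s2: "fwd (Par X' Y0) (Pfx (OPar DR) w) (Par X' Y)"
      using h kw local.parL.hyps fwd_keys[OF local.parL.hyps(1)] by (auto intro: fwd.parR)
    have "indep (Pfx (OPar DL) thl) (Pfx (OPar DR) w)"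
    proof -
      have "pkey thl \<noteq> pkey w" using kw local.parL.hyps(2) by auto
      then show ?thesis using indep.P2[of thl w DL] by simp
    qed
    then show ?thesis using s1 s2 h by auto
  next
    case syn
    then obtain X1 Y1 w1 w2 l where h: "fwd X1 w1 X" "fwd Y1 w2 Y" "A1 = Par X1 Y1" "thw = Syn w1 w2"
      "plbl w1 = Vis l" "plbl w2 = Vis (cobar l)" "pkey w1 = pkey w2" by auto
    have "(pkey w1, pkey thl) \<notin> ord X'" using parL.prems(2) h(4) by auto
    from local.parL.IH[OF h(1) this] obtain A'' where a: "fwd X1 thl A''" "fwd A'' w1 X'" "indep thl w1"
      by auto
    have "keys Y1 \<subseteq> keys Y" using fwd_keys[OF h(2)] by auto
    then have s1: "fwd (Par X1 Y1) (Pfx (OPar DL) thl) (Par A'' Y1)"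
      using a local.parL.hyps by (auto intro: fwd.parL)
    have s2: "fwd (Par A'' Y1) (Syn w1 w2) (Par X' Y)"
      using a h by (auto intro: fwd.syn)
    have "indep (Pfx (OPar DL) thl) (Syn w1 w2)"
      using indep.S1[of thl DL w1 w2] a by auto
    then show ?thesis using s1 s2 h by auto
  qed (auto)?
next
  case (parR X thl X' Y)
  from parR.prems(1) show ?case
  proof (cases rule: fwd.cases)
    case parR
    then obtain X1 w where h: "fwd X1 w X" "A1 = Par Y X1" "thw = Pfx (OPar DR) w" "pkey w \<notin> keys Y" by auto
    have "(pkey w, pkey thl) \<notin> ord X'" using parR.prems(2) h(3) by auto
    from local.parR.IH[OF h(1) this] obtain A'' where "fwd X1 thl A''" "fwd A'' w X'" "indep thl w"
      by auto
    then show ?thesis using h local.parR.hyps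
      by (intro exI[of _ "Par Y A''"]) (auto intro: fwd.parR indep.P1)
  next
    case parL
    then obtain Y0 w where h: "fwd Y0 w Y" "A1 = Par Y0 X" "thw = Pfx (OPar DL) w" "pkey w \<notin> keys X" by auto
    have kw: "pkey w \<in> keys Y" using fwd_key_in[OF h(1)] .
    have "keys Y0 \<subseteq> keys Y" using fwd_keys[OF h(1)] by auto
    then have s1: "fwd (Par Y0 X) (Pfx (OPar DR) thl) (Par Y0 X')"
      using local.parR.hyps by (auto intro: fwd.parR)
    have s2: "fwd (Par Y0 X') (Pfx (OPar DL) w) (Par Y X')"
      using h kw local.parR.hyps fwd_keys[OF local.parR.hyps(1)] by (auto intro: fwd.parL)
    have "indep (Pfx (OPar DR) thl) (Pfx (OPar DL) w)"
    proof -
      have "pkey thl \<noteq> pkey w" using kw local.parR.hyps(2) by auto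
      then show ?thesis using indep.P2[of thl w DR] by simp
    qed
    then show ?thesis using s1 s2 h by auto
  next
    case syn
    then obtain X1 Y1 w1 w2 l where h: "fwd X1 w2 X" "fwd Y1 w1 Y" "A1 = Par Y1 X1" "thw = Syn w1 w2"
      "plbl w1 = Vis l" "plbl w2 = Vis (cobar l)" "pkey w1 = pkey w2" by auto
    have "(pkey w2, pkey thl) \<notin> ord X'" using parR.prems(2) h(4) h(7) by auto
    from local.parR.IH[OF h(1) this] obtain A'' where a: "fwd X1 thl A''" "fwd A'' w2 X'" "indep thl w2"
      by auto
    have "keys Y1 \<subseteq> keys Y" using fwd_keys[OF h(2)] by auto
    then have s1: "fwd (Par Y1 X1) (Pfx (OPar DR) thl) (Par Y1 A'')"
      using a local.parR.hyps by (auto intro: fwd.parR)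
    have s2: "fwd (Par Y1 A'') (Syn w1 w2) (Par Y X')"
      using a h by (auto intro: fwd.syn)
    have "indep (Pfx (OPar DR) thl) (Syn w1 w2)"
      using indep.S1[of thl DR w1 w2] a by auto
    then show ?thesis using s1 s2 h by auto
  qed (auto)?
next
  case (syn X th1 X' Y th2 Y' l)
  have k1: "pkey th1 \<notin> keys X" using fwd_key_notin[OF syn.hyps(1)] .
  have k2: "pkey th2 \<notin> keys Y" using fwd_key_notin[OF syn.hyps(2)] .
  from syn.prems(1) show ?case
  proof (cases rule: fwd.cases)
    case parL
    then obtain X1 w where h: "fwd X1 w X" "A1 = Par X1 Y" "thw = Pfx (OPar DL) w" "pkey w \<notin> keys Y" by auto
    have "(pkey w, pkey th1) \<notin> ord X'" using syn.prems(2) h(3) by auto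
    from local.syn.IH(1)[OF h(1) this] obtain A'' where a: "fwd X1 th1 A''" "fwd A'' w X'" "indep th1 w"
      by auto
    have kw: "pkey w \<in> keys X" using fwd_key_in[OF h(1)] .
    have s1: "fwd (Par X1 Y) (Syn th1 th2) (Par A'' Y')" using a local.syn.hyps by (auto intro: fwd.syn)
    have s2: "fwd (Par A'' Y') (Pfx (OPar DL) w) (Par X' Y')"
      using a h kw k1 local.syn.hyps fwd_keys[OF local.syn.hyps(2)] by (auto intro: fwd.parL)
    have "indep (Syn th1 th2) (Pfx (OPar DL) w)" using indep.S2[of DL th1 th2 w] a by auto
    then show ?thesis using s1 s2 h by auto
  next
    case parR
    then obtain Y1 w where h: "fwd Y1 w Y" "A1 = Par X Y1" "thw = Pfx (OPar DR) w" "pkey w \<notin> keys X" by auto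
    have "(pkey w, pkey th2) \<notin> ord Y'" using syn.prems(2) h(3) local.syn.hyps(5) by auto
    from local.syn.IH(2)[OF h(1) this] obtain A'' where a: "fwd Y1 th2 A''" "fwd A'' w Y'" "indep th2 w"
      by auto
    have kw: "pkey w \<in> keys Y" using fwd_key_in[OF h(1)] .
    have s1: "fwd (Par X Y1) (Syn th1 th2) (Par X' A'')" using a local.syn.hyps by (auto intro: fwd.syn)
    have s2: "fwd (Par X' A'') (Pfx (OPar DR) w) (Par X' Y')"
      using a h kw k2 local.syn.hyps fwd_keys[OF local.syn.hyps(1)] by (auto intro: fwd.parR)
    have "indep (Syn th1 th2) (Pfx (OPar DR) w)" using indep.S2[of DR th1 th2 w] a by auto
    then show ?thesis using s1 s2 h by auto
  next
    case syn
    then obtain X1 Y1 w1 w2 l' where h: "fwd X1 w1 X" "fwd Y1 w2 Y" "A1 = Par X1 Y1" "thw = Syn w1 w2"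
      "plbl w1 = Vis l'" "plbl w2 = Vis (cobar l')" "pkey w1 = pkey w2" by auto
    have "(pkey w1, pkey th1) \<notin> ord X'" using syn.prems(2) h(4) by auto
    from local.syn.IH(1)[OF h(1) this] obtain A1'' where a: "fwd X1 th1 A1''" "fwd A1'' w1 X'" "indep th1 w1"
      by auto
    have "(pkey w2, pkey th2) \<notin> ord Y'" using syn.prems(2) h(4) h(7) local.syn.hyps(5) by auto
    from local.syn.IH(2)[OF h(2) this] obtain A2'' where b: "fwd Y1 th2 A2''" "fwd A2'' w2 Y'" "indep th2 w2"
      by auto
    have s1: "fwd (Par X1 Y1) (Syn th1 th2) (Par A1'' A2'')" using a b local.syn.hyps by (auto intro: fwd.syn)
    have s2: "fwd (Par A1'' A2'') (Syn w1 w2) (Par X' Y')" using a b h by (auto intro: fwd.syn)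
    have "indep (Syn th1 th2) (Syn w1 w2)" using indep.S3 a b by auto
    then show ?thesis using s1 s2 h by auto
  qed (auto)?
next
  case (sumL X thl X' Y)
  from sumL.prems(1) show ?case
  proof (cases rule: fwd.cases)
    case sumL
    then obtain X1 w where h: "fwd X1 w X" "A1 = Choice X1 Y" "thw = Pfx (OSum DL) w" by auto
    have "(pkey w, pkey thl) \<notin> ord X'" using sumL.prems(2) h(3) by auto
    from local.sumL.IH[OF h(1) this] obtain A'' where "fwd X1 thl A''" "fwd A'' w X'" "indep thl w"
      by auto
    then show ?thesis using h local.sumL.hyps
      by (intro exI[of _ "Choice A'' Y"]) (auto intro: fwd.sumL indep.C1)
  next
    case sumR
    then show ?thesis using local.sumL.hyps by (auto dest: fwd_key_in)
  qed (auto)?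
next
  case (sumR X thl X' Y)
  from sumR.prems(1) show ?case
  proof (cases rule: fwd.cases)
    case sumR
    then obtain X1 w where h: "fwd X1 w X" "A1 = Choice Y X1" "thw = Pfx (OSum DR) w" by auto
    have "(pkey w, pkey thl) \<notin> ord X'" using sumR.prems(2) h(3) by auto
    from local.sumR.IH[OF h(1) this] obtain A'' where "fwd X1 thl A''" "fwd A'' w X'" "indep thl w"
      by auto
    then show ?thesis using h local.sumR.hyps
      by (intro exI[of _ "Choice Y A''"]) (auto intro: fwd.sumR indep.C1)
  next
    case sumL
    then show ?thesis using local.sumR.hyps by (auto dest: fwd_key_in)
  qed (auto)?
qed

definition dw :: "key \<Rightarrow> 'n proc \<Rightarrow> key set" where
  "dw k Q = {x. (x,k) \<in> (ord Q)\<^sup>*}"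

definition sd :: "key \<Rightarrow> 'n proc \<Rightarrow> key set" where
  "sd k Q = dw k Q - {k}"

lemma dw_dc: "dc (dw k Q) (ord Q)"
  unfolding dc_def dw_def by (auto intro: converse_rtrancl_into_rtrancl)

lemma k_in_dw: "k \<in> dw k Q"
  unfolding dw_def by simp

lemma dw_out: "x \<in> dw k Q \<Longrightarrow> x \<noteq> k \<Longrightarrow> \<exists>z. (x,z) \<in> ord Q"
  unfolding dw_def by (auto elim: converse_rtranclE)

lemma dw_insert: "dw k Q = insert k (sd k Q)"
  unfolding sd_def using k_in_dw by auto

lemma fwd_sd_keys: "fwd P th Q \<Longrightarrow> sd (pkey th) Q \<subseteq> keys P"
proof
  fix x assume f: "fwd P th Q" and x: "x \<in> sd (pkey th) Q"
  then obtain z where "(x,z) \<in> ord Q" using dw_out unfolding sd_def by blast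
  then have "x \<in> keys Q" using ord_keys by blast
  then show "x \<in> keys P" using x fwd_keys[OF f] unfolding sd_def by auto
qed

lemma sd_dc: assumes f: "fwd P th Q" shows "dc (sd (pkey th) Q) (ord Q)"
  unfolding dc_def
proof (intro allI impI)
  fix a b assume ab: "(a,b) \<in> ord Q" "b \<in> sd (pkey th) Q"
  then have "a \<in> dw (pkey th) Q" using dw_dc[of "pkey th" Q] unfolding dc_def sd_def by blast
  moreover have "a \<noteq> pkey th" using fwd_ord_out[OF f] ab(1) by blast
  ultimately show "a \<in> sd (pkey th) Q" unfolding sd_def by simp
qed

lemma sd_dcP: assumes f: "fwd P th Q" shows "dc (sd (pkey th) Q) (ord P)"
  using dc_mono[OF sd_dc[OF f] fwd_ord_mono[OF f]] .

lemma ku_notin_dw: assumes f: "fwd S thu Q" and k: "k \<noteq> pkey thu" shows "pkey thu \<notin> dw k Q"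
proof
  assume "pkey thu \<in> dw k Q"
  then obtain z where "(pkey thu, z) \<in> ord Q" using dw_out k by metis
  then show False using fwd_ord_out[OF f] by blast
qed

lemma dw_step: assumes f: "fwd S thu Q" and k: "k \<noteq> pkey thu" shows "dw k Q = dw k S"
proof
  show "dw k S \<subseteq> dw k Q" unfolding dw_def using rtrancl_mono[OF fwd_ord_mono[OF f]] by auto
next
  show "dw k Q \<subseteq> dw k S"
  proof
    fix x assume "x \<in> dw k Q"
    then have "(x,k) \<in> (ord Q)\<^sup>*" unfolding dw_def by simp
    then have "(x,k) \<in> (ord S)\<^sup>*"
    proof (induction rule: converse_rtrancl_induct)
      case base then show ?case by simp
    next
      case (step y z)
      show ?case
      proof (cases "z = pkey thu")
        case True
        then have "pkey thu \<in> dw k Q" using step.hyps(2) unfolding dw_def by simp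
        then show ?thesis using ku_notin_dw[OF f k] by simp
      next
        case False
        then have "(y,z) \<in> ord S" using step.hyps(1) fwd_ord_new[OF f] by auto
        then show ?thesis using step.IH by (rule converse_rtrancl_into_rtrancl)
      qed
    qed
    then show "x \<in> dw k S" unfolding dw_def by simp
  qed
qed

lemma peel: "FR P \<Longrightarrow> K \<subseteq> keys P \<Longrightarrow> dc K (ord P) \<Longrightarrow> K \<noteq> keys P \<Longrightarrow>
  \<exists>A thw. FR A \<and> fwd A thw P \<and> pkey thw \<notin> K"
proof (induction arbitrary: K rule: FR.induct)
  case (FR_std S) then show ?case by auto
next
  case (FR_step P0 thl P)
  show ?case
  proof (cases "pkey thl \<in> K")
    case False then show ?thesis using FR_step.hyps by blast
  next
    case True
    let ?K = "K - {pkey thl}"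
    have kP: "keys P = insert (pkey thl) (keys P0)" using fwd_keys[OF FR_step.hyps(2)] .
    have nl: "pkey thl \<notin> keys P0" using fwd_key_notin[OF FR_step.hyps(2)] .
    have a1: "?K \<subseteq> keys P0" using FR_step.prems(1) kP by auto
    have a2: "dc ?K (ord P0)"
      unfolding dc_def
    proof (intro allI impI)
      fix a b assume ab: "(a,b) \<in> ord P0" "b \<in> ?K"
      then have "a \<in> K" using FR_step.prems(2) fwd_ord_mono[OF FR_step.hyps(2)] unfolding dc_def by blast
      moreover have "a \<in> keys P0" using ord_keys[OF ab(1)] by simp
      ultimately show "a \<in> ?K" using nl by auto
    qed
    have a3: "?K \<noteq> keys P0" using FR_step.prems(3) True kP nl by auto
    from FR_step.IH[OF a1 a2 a3] obtain A1 thw where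
      h: "FR A1" "fwd A1 thw P0" "pkey thw \<notin> ?K" by blast
    have kw: "pkey thw \<in> keys P0" using fwd_key_in[OF h(2)] .
    then have kwK: "pkey thw \<notin> K" using h(3) nl by auto
    have "(pkey thw, pkey thl) \<notin> ord P" using FR_step.prems(2) True kwK unfolding dc_def by blast
    from swap[OF FR_step.hyps(2) h(2) this] obtain A' where "fwd A1 thl A'" "fwd A' thw P" by blast
    then show ?thesis using h(1) kwK by (blast intro: FR.FR_step)
  qed
qed

lemma STEP:
  assumes f1: "fwd A thu B" and f2: "fwd B th C" and f3: "fwd A th D" and f4: "fwd D thu C"
  shows "dw (pkey th) C = dw (pkey th) D \<and> proj (sd (pkey th) C) B = proj (sd (pkey th) C) A"
proof
  have ne: "pkey th \<noteq> pkey thu" using fwd_key_in[OF f1] fwd_key_notin[OF f2] by auto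
  show "dw (pkey th) C = dw (pkey th) D" using dw_step[OF f4 ne] .
  have d: "dc (sd (pkey th) C) (ord B)" using sd_dcP[OF f2] .
  have "pkey thu \<notin> sd (pkey th) C" using ku_notin_dw[OF f4 ne] unfolding sd_def by auto
  then show "proj (sd (pkey th) C) B = proj (sd (pkey th) C) A"
    using proj_fwd[OF f1 d] by simp
qed

lemma path_single: "is_trans t \<Longrightarrow> path (src t) [t] (tgt t)"
  by (auto intro: path.intros)

lemma LB_aux: "card (keys P - sd (pkey th) Q) = n \<Longrightarrow> FR P \<Longrightarrow> fwd P th Q \<Longrightarrow>
   sim (P, th, True, Q) (proj (sd (pkey th) Q) P, th, True, proj (dw (pkey th) Q) Q)"
proof (induction n arbitrary: P Q rule: less_induct)
  case (less n P Q)
  let ?k = "pkey th"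
  let ?D = "sd ?k Q"
  have f: "fwd P th Q" by fact
  have Dsub: "?D \<subseteq> keys P" using fwd_sd_keys[OF f] .
  have dcP: "dc ?D (ord P)" using sd_dcP[OF f] .
  have kP: "?k \<notin> keys P" using fwd_key_notin[OF f] .
  have tt: "is_trans (P, th, True, Q)" unfolding is_trans_def src_def tgt_def tlab_def isfwd_def using f by simp
  show ?case
  proof (cases "keys P = ?D")
    case True
    have "proj ?D P = P" using True by (simp add: proj_std)
    moreover have "proj (dw ?k Q) Q = Q"
      using True fwd_keys[OF f] dw_insert[of ?k Q] by (simp add: proj_std)
    ultimately show ?thesis using tt by (simp add: sim_refl)
  next
    case False
    from peel[OF less.prems(2) Dsub dcP] False obtain A thw where
      h: "FR A" "fwd A thw P" "pkey thw \<notin> ?D" by metis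
    have kw: "pkey thw \<in> keys P" using fwd_key_in[OF h(2)] .
    have kwA: "pkey thw \<notin> keys A" using fwd_key_notin[OF h(2)] .
    have ne: "?k \<noteq> pkey thw" using kw kP by auto
    have "(pkey thw, ?k) \<notin> ord Q"
    proof
      assume "(pkey thw, ?k) \<in> ord Q"
      then have "pkey thw \<in> dw ?k Q" unfolding dw_def by auto
      then show False using h(3) ne unfolding sd_def by auto
    qed
    from swap[OF f h(2) this] obtain S' where s: "fwd A th S'" "fwd S' thw Q" "indep th thw" by blast
    have tu: "is_trans (P, thw, False, A)" unfolding is_trans_def src_def tgt_def tlab_def isfwd_def using h(2) by simp
    have tu': "is_trans (Q, thw, False, S')" unfolding is_trans_def src_def tgt_def tlab_def isfwd_def using s(2) by simp
    have tt': "is_trans (A, th, True, S')" unfolding is_trans_def src_def tgt_def tlab_def isfwd_def using s(1) by simp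
    have "path P [(P, thw, False, A)] A" using path_single[OF tu] by (simp add: src_def tgt_def)
    then have "tindep (P, th, True, Q) (P, thw, False, A)"
      unfolding tindep_def connected_def using s(3) by (auto simp: src_def tgt_def tlab_def)
    then have sim1: "sim (P, th, True, Q) (A, th, True, S')"
      using sim_diamond[OF refl refl refl refl tt tu tu' tt'] by simp
    have dweq: "dw ?k S' = dw ?k Q" using dw_step[OF s(2) ne] by simp
    then have sdeq: "sd ?k S' = ?D" unfolding sd_def by simp
    have "keys P - ?D = insert (pkey thw) (keys A - ?D)" using fwd_keys[OF h(2)] h(3) by auto
    then have "card (keys P - ?D) = Suc (card (keys A - ?D))"
      using kwA finite_keys[of A] by simp
    then have lt: "card (keys A - sd ?k S') < n" using less.prems(1) sdeq by simp
    have sim2: "sim (A, th, True, S') (proj (sd ?k S') A, th, True, proj (dw ?k S') S')"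
      using less.IH[OF lt refl h(1) s(1)] .
    have e1: "proj ?D A = proj ?D P" using proj_fwd[OF h(2) dcP] h(3) by simp
    have "pkey thw \<notin> dw ?k Q" using ku_notin_dw[OF s(2) ne] .
    then have e2: "proj (dw ?k Q) S' = proj (dw ?k Q) Q" using proj_fwd[OF s(2) dw_dc] by simp
    show ?thesis using sim_trans[OF sim1 sim2] sdeq dweq e1 e2 by simp
  qed
qed

lemma LB: "FR P \<Longrightarrow> fwd P th Q \<Longrightarrow>
   sim (P, th, True, Q) (proj (sd (pkey th) Q) P, th, True, proj (dw (pkey th) Q) Q)"
  using LB_aux by blast

lemma tinv_tinv[simp]: "tinv (tinv t) = t"
  by (cases t) (simp add: tinv_def src_def tgt_def tlab_def isfwd_def)

lemma tinv_simps[simp]: "src (tinv t) = tgt t" "tgt (tinv t) = src t" "tlab (tinv t) = tlab t"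
  "isfwd (tinv t) = (\<not> isfwd t)"
  by (simp_all add: tinv_def src_def tgt_def tlab_def isfwd_def)

lemma is_trans_tinv[simp]: "is_trans (tinv t) = is_trans t"
  unfolding is_trans_def by simp

lemma quad_simps[simp]: "src (P,th,d,Q) = P" "tgt (P,th,d,Q) = Q" "tlab (P,th,d,Q) = th" "isfwd (P,th,d,Q) = d"
  by (simp_all add: src_def tgt_def tlab_def isfwd_def)

lemma is_trans_quad: "is_trans (P,th,d,Q) = (if d then fwd P th Q else fwd Q th P)"
  unfolding is_trans_def by simp

lemma FR_trans: "is_trans t \<Longrightarrow> FR (src t) = FR (tgt t)"
  unfolding is_trans_def by (cases "isfwd t") (auto intro: FR.FR_step FR_back)

lemma path_FR: "path P r Q \<Longrightarrow> (FR P \<longleftrightarrow> FR Q) \<and> (\<forall>s\<in>set r. FR (src s) \<longleftrightarrow> FR P)"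
proof (induction rule: path.induct)
  case (path_nil P) then show ?case by simp
next
  case (path_cons t P r Q)
  then show ?case using FR_trans[OF path_cons.hyps(1)] by auto
qed

lemma path_snoc: "path P r Q \<Longrightarrow> is_trans t \<Longrightarrow> src t = Q \<Longrightarrow> path P (r @ [t]) (tgt t)"
  by (induction rule: path.induct) (auto intro: path.intros)

lemma FR_path: "FR Z \<Longrightarrow> \<exists>S r. keys S = {} \<and> path S r Z"
proof (induction rule: FR.induct)
  case (FR_std S) then show ?case by (auto intro: path.intros)
next
  case (FR_step P th Q)
  then obtain S r where "keys S = {}" "path S r P" by blast
  moreover have "is_trans (P,th,True,Q)" using FR_step.hyps(2) by (simp add: is_trans_quad)
  ultimately show ?case using path_snoc[of S r P "(P,th,True,Q)"] by auto
qed

lemma sim_is: "sim t t' \<Longrightarrow> is_trans t \<and> is_trans t'"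
  by (induction rule: sim.induct) auto

lemma sim_FR: "sim t t' \<Longrightarrow> FR (src t) = FR (src t')"
proof (induction rule: sim.induct)
  case (sim_diamond t P tht dt Q u thu du R u' S t')
  then show ?case using FR_trans[of u] by simp
qed auto

lemma sim_tinv: "sim t t' \<Longrightarrow> sim (tinv t) (tinv t')"
proof (induction rule: sim.induct)
  case (sim_diamond t P tht dt Q u thu du R u' S t')
  have e1: "tinv t = (Q, tht, \<not>dt, P)" "tinv t' = (S, tht, \<not>dt, R)"
    using sim_diamond.hyps(1,4) by (simp_all add: tinv_def)
  have "path Q [u'] S" using path_single[of u'] sim_diamond.hyps(3,7) by simp
  then have "tindep (tinv t) u'"
    using sim_diamond.hyps(9,1,2,3) e1 unfolding tindep_def connected_def by auto
  moreover have "is_trans (tinv t)" "is_trans (tinv t')" using sim_diamond.hyps by simp_all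
  ultimately show ?case
    using sim.sim_diamond[OF e1(1) sim_diamond.hyps(3) sim_diamond.hyps(2) e1(2)] sim_diamond.hyps(6,7)
    by simp
next
  case (sim_refl t) then show ?case by (simp add: sim.sim_refl)
next
  case (sim_sym t t') then show ?case by (blast intro: sim.sim_sym)
next
  case (sim_trans t t' t'') then show ?case by (blast intro: sim.sim_trans)
qed

definition prest :: "'n trans \<Rightarrow> 'n proc" where
  "prest t = (if isfwd t then src t else tgt t)"
definition postst :: "'n trans \<Rightarrow> 'n proc" where
  "postst t = (if isfwd t then tgt t else src t)"

definition sigf :: "'n trans \<Rightarrow> 'n plab \<times> bool \<times> key set \<times> 'n proc" where
  "sigf t = (tlab t, isfwd t, dw (pkey (tlab t)) (postst t), proj (sd (pkey (tlab t)) (postst t)) (prest t))"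

lemma STEP':
  assumes "fwd A thu B" "fwd B th C" "fwd A th D" "fwd D thu C"
  shows "dw (pkey th) C = dw (pkey th) D \<and> proj (sd (pkey th) C) B = proj (sd (pkey th) D) A"
  using STEP[OF assms] unfolding sd_def by metis

lemma I1: "sim t t' \<Longrightarrow> sigf t = sigf t'"
proof (induction rule: sim.induct)
  case (sim_diamond t P tht dt Q u thu du R u' S t')
  note h = sim_diamond.hyps
  have tr: "is_trans (P,tht,dt,Q)" "is_trans (P,thu,du,R)" "is_trans (Q,thu,du,S)" "is_trans (R,tht,dt,S)"
    using h by simp_all
  show ?case
  proof (cases dt)
    case True note dt = this
    show ?thesis
    proof (cases du)
      case True
      then have "fwd P tht Q" "fwd P thu R" "fwd Q thu S" "fwd R tht S" using tr dt by (simp_all add: is_trans_quad)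
      from STEP'[OF this(2,4,1,3)] show ?thesis using h(1,4) dt by (simp add: sigf_def prest_def postst_def)
    next
      case False
      then have "fwd P tht Q" "fwd R thu P" "fwd S thu Q" "fwd R tht S" using tr dt by (simp_all add: is_trans_quad)
      from STEP'[OF this(2,1,4,3)] show ?thesis using h(1,4) dt by (simp add: sigf_def prest_def postst_def)
    qed
  next
    case False note dt = this
    show ?thesis
    proof (cases du)
      case True
      then have "fwd Q tht P" "fwd P thu R" "fwd Q thu S" "fwd S tht R" using tr dt by (simp_all add: is_trans_quad)
      from STEP'[OF this(3,4,1,2)] show ?thesis using h(1,4) dt by (simp add: sigf_def prest_def postst_def)
    next
      case False
      then have "fwd Q tht P" "fwd R thu P" "fwd S thu Q" "fwd S tht R" using tr dt by (simp_all add: is_trans_quad)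
      from STEP'[OF this(3,1,4,2)] show ?thesis using h(1,4) dt by (simp add: sigf_def prest_def postst_def)
    qed
  qed
qed auto

definition dn :: "'n plab \<Rightarrow> 'n proc \<Rightarrow> 'n proc \<Rightarrow> bool" where
  "dn th Q0 X \<longleftrightarrow> dw (pkey th) Q0 \<subseteq> keys X \<and> dc (dw (pkey th) Q0) (ord X)
     \<and> proj (dw (pkey th) Q0) X = proj (dw (pkey th) Q0) Q0"

lemma dwR: assumes "dc K R" "k \<in> K"
  shows "{x. (x,k) \<in> R\<^sup>*} = {x. (x,k) \<in> (R \<inter> K \<times> K)\<^sup>*}"
proof
  show "{x. (x,k) \<in> (R \<inter> K \<times> K)\<^sup>*} \<subseteq> {x. (x,k) \<in> R\<^sup>*}"
    using rtrancl_mono[of "R \<inter> K \<times> K" R] by auto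
next
  show "{x. (x,k) \<in> R\<^sup>*} \<subseteq> {x. (x,k) \<in> (R \<inter> K \<times> K)\<^sup>*}"
  proof
    fix x assume "x \<in> {x. (x,k) \<in> R\<^sup>*}"
    then have "(x,k) \<in> R\<^sup>*" by simp
    then have "(x,k) \<in> (R \<inter> K \<times> K)\<^sup>*"
    proof (induction rule: converse_rtrancl_induct)
      case base then show ?case by simp
    next
      case (step y z)
      have "z \<in> K" using dc_rtrancl[OF assms(1) step.hyps(2) assms(2)] .
      moreover have "y \<in> K" using assms(1) step.hyps(1) calculation unfolding dc_def by blast
      ultimately show ?case using step.hyps(1) step.IH by (blast intro: converse_rtrancl_into_rtrancl)
    qed
    then show "x \<in> {x. (x,k) \<in> (R \<inter> K \<times> K)\<^sup>*}" by simp
  qed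
qed

lemma dw_proj: "dc K (ord X) \<Longrightarrow> k \<in> K \<Longrightarrow> dw k (proj K X) = dw k X"
  unfolding dw_def using ord_proj_dc dwR by metis

lemma dn_dw: "dn th Q0 X \<Longrightarrow> dw (pkey th) X = dw (pkey th) Q0"
proof -
  assume d: "dn th Q0 X"
  let ?K = "dw (pkey th) Q0"
  have "dw (pkey th) X = dw (pkey th) (proj ?K X)" using dw_proj[of ?K X "pkey th"] d k_in_dw unfolding dn_def by metis
  also have "\<dots> = dw (pkey th) (proj ?K Q0)" using d unfolding dn_def by simp
  also have "\<dots> = dw (pkey th) Q0" using dw_proj[OF dw_dc k_in_dw] .
  finally show ?thesis .
qed

lemma dw_keys: "k \<in> keys Q \<Longrightarrow> dw k Q \<subseteq> keys Q"
  using dw_out ord_keys by blast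

lemma Delta1:
  assumes s: "sim (P0,th,True,Q0) (X,ths,True,Y)" and f0: "fwd P0 th Q0" and f: "fwd X ths Y"
  shows "\<not> dn th Q0 X \<and> dn th Q0 Y"
proof -
  have sg: "sigf (P0,th,True,Q0) = sigf (X,ths,True,Y)" using I1[OF s] .
  then have ths: "ths = th" and dweq: "dw (pkey th) Y = dw (pkey th) Q0"
    and pr: "proj (sd (pkey th) Y) X = proj (sd (pkey th) Q0) P0"
    by (auto simp: sigf_def prest_def postst_def)
  let ?k = "pkey th"
  let ?K = "dw ?k Q0"
  have kX: "?k \<notin> keys X" using fwd_key_notin[OF f] ths by simp
  have "\<not> dn th Q0 X" using kX k_in_dw[of ?k Q0] unfolding dn_def by blast
  moreover have "dn th Q0 Y"
    unfolding dn_def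
  proof (intro conjI)
    have "?k \<in> keys Y" using fwd_key_in[OF f] ths by simp
    then show "?K \<subseteq> keys Y" using dw_keys dweq by metis
    show dcY: "dc ?K (ord Y)" using dw_dc[of ?k Y] dweq by simp
    have "fwd (proj ?K X) th (proj ?K Y)" using proj_fwd[OF f dcY] ths by (simp add: k_in_dw)
    moreover have "proj ?K X = proj (sd ?k Y) X"
      using proj_insert_notin[OF kX] dw_insert[of ?k Y] dweq by metis
    moreover have "proj ?K P0 = proj (sd ?k Q0) P0"
      using proj_insert_notin[OF fwd_key_notin[OF f0]] dw_insert[of ?k Q0] by metis
    moreover have "fwd (proj ?K P0) th (proj ?K Q0)" using proj_fwd[OF f0 dw_dc] by (simp add: k_in_dw)
    ultimately show "proj ?K Y = proj ?K Q0" using pr fwd_det by metis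
  qed
  ultimately show ?thesis by simp
qed

lemma Delta2:
  assumes fx: "FR X" and fp: "FR P0" and f0: "fwd P0 th Q0" and f: "fwd X ths Y"
    and ne: "dn th Q0 X \<noteq> dn th Q0 Y"
  shows "sim (P0,th,True,Q0) (X,ths,True,Y)"
proof -
  let ?k = "pkey th"
  let ?K = "dw ?k Q0"
  let ?ks = "pkey ths"
  have kY: "keys Y = insert ?ks (keys X)" using fwd_keys[OF f] .
  have ksX: "?ks \<notin> keys X" using fwd_key_notin[OF f] .
  show ?thesis
  proof (cases "?ks \<in> ?K")
    case False
    have a: "(?K \<subseteq> keys X) = (?K \<subseteq> keys Y)" using kY False by auto
    have b: "dc ?K (ord X) = dc ?K (ord Y)"
    proof
      assume d: "dc ?K (ord X)"
      show "dc ?K (ord Y)" unfolding dc_def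
      proof (intro allI impI)
        fix a b assume ab: "(a,b) \<in> ord Y" "b \<in> ?K"
        then have "b \<noteq> ?ks" using False by auto
        then have "(a,b) \<in> ord X" using ab(1) fwd_ord_new[OF f] by auto
        then show "a \<in> ?K" using d ab(2) unfolding dc_def by blast
      qed
    next
      assume "dc ?K (ord Y)" then show "dc ?K (ord X)" using dc_mono fwd_ord_mono[OF f] by blast
    qed
    have "dn th Q0 X = dn th Q0 Y"
    proof (cases "dc ?K (ord Y)")
      case True
      then have "proj ?K X = proj ?K Y" using proj_fwd[OF f True] False by simp
      then show ?thesis using a b unfolding dn_def by simp
    next
      case False then show ?thesis using b unfolding dn_def by simp
    qed
    then show ?thesis using ne by simp
  next
    case True
    have ndX: "\<not> dn th Q0 X" using True ksX unfolding dn_def by blast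
    then have dY: "dn th Q0 Y" using ne by simp
    then have dcY: "dc ?K (ord Y)" and pY: "proj ?K Y = proj ?K Q0" unfolding dn_def by auto
    have f1: "fwd (proj ?K X) ths (proj ?K Q0)" using proj_fwd[OF f dcY] True pY by simp
    have "?ks = ?k"
    proof (rule ccontr)
      assume nk: "?ks \<noteq> ?k"
      have "?ks \<in> dw ?k (proj ?K Q0)" using True dw_proj[OF dw_dc k_in_dw, of ?k Q0] by simp
      then obtain z where "(?ks, z) \<in> ord (proj ?K Q0)" using dw_out nk by metis
      then show False using fwd_ord_out[OF f1] by blast
    qed
    moreover have f2: "fwd (proj ?K P0) th (proj ?K Q0)" using proj_fwd[OF f0 dw_dc] by (simp add: k_in_dw)
    ultimately have eq: "ths = th" "proj ?K X = proj ?K P0" using fwd_bdet[OF f1 f2] by auto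
    have dwY: "dw ?k Y = ?K" using dn_dw[OF dY] .
    have sdY: "sd ?k Y = sd ?k Q0" unfolding sd_def using dwY by simp
    have sdK: "sd ?k Q0 \<inter> ?K = sd ?k Q0" unfolding sd_def by auto
    have p1: "proj (sd ?k Y) X = proj (sd ?k Q0) P0"
      using proj_proj[of "sd ?k Q0" ?K X] proj_proj[of "sd ?k Q0" ?K P0] eq(2) sdY sdK by metis
    have L1: "sim (X, th, True, Y) (proj (sd ?k Y) X, th, True, proj (dw ?k Y) Y)"
      using LB[OF fx] f eq(1) by simp
    have L2: "sim (P0, th, True, Q0) (proj (sd ?k Q0) P0, th, True, proj (dw ?k Q0) Q0)"
      using LB[OF fp f0] .
    have L1': "sim (proj (sd ?k Q0) P0, th, True, proj (dw ?k Q0) Q0) (X, th, True, Y)"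
      using sim_sym[OF L1] p1 dwY pY by simp
    have "sim (P0, th, True, Q0) (X, th, True, Y)"
      using sim_trans[OF L2 L1'] .
    then show ?thesis using eq(1) by simp
  qed
qed

lemma mem_ebar:
  assumes t0: "is_trans t0"
  shows "t \<in> ebar (cls t0) \<longleftrightarrow> sim t0 (tinv t)"
proof -
  have "t0 \<in> cls t0" unfolding cls_def using t0 by (simp add: sim_refl)
  then have "(SOME t. t \<in> cls t0) \<in> cls t0" by (rule someI)
  then have s1: "sim t0 (SOME t. t \<in> cls t0)" unfolding cls_def by simp
  define t1 where "t1 = (SOME t. t \<in> cls t0)"
  have s1': "sim t0 t1" using s1 t1_def by simp
  have "t \<in> ebar (cls t0) \<longleftrightarrow> sim (tinv t1) t" unfolding ebar_def cls_def t1_def by simp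
  also have "\<dots> \<longleftrightarrow> sim t0 (tinv t)"
  proof
    assume "sim (tinv t1) t"
    then have "sim t1 (tinv t)" using sim_tinv by fastforce
    then show "sim t0 (tinv t)" using s1' by (blast intro: sim_trans)
  next
    assume "sim t0 (tinv t)"
    then have "sim t1 (tinv t)" using s1' by (blast intro: sim_trans sim_sym)
    then show "sim (tinv t1) t" using sim_tinv by fastforce
  qed
  finally show ?thesis .
qed

lemma sharp_dn:
  assumes f0: "fwd P0 th Q0" and fp: "FR P0"
  shows "path P r Q \<Longrightarrow> FR P \<Longrightarrow>
    sharp r (cls (P0,th,True,Q0)) = of_bool (dn th Q0 Q) - of_bool (dn th Q0 P)"
proof (induction rule: path.induct)
  case (path_nil P) then show ?case by simp
next
  case (path_cons t P r Q)
  let ?t0 = "(P0,th,True,Q0)"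
  let ?e = "cls ?t0"
  have t0: "is_trans ?t0" using f0 by (simp add: is_trans_quad)
  have FRt: "FR (tgt t)" using FR_trans[OF path_cons.hyps(1)] path_cons.hyps(2) path_cons.prems by simp
  have IH: "sharp r ?e = of_bool (dn th Q0 Q) - of_bool (dn th Q0 (tgt t))" using path_cons.IH[OF FRt] .
  have c: "(if t \<in> ?e then 1 else if t \<in> ebar ?e then -1 else (0::int))
           = of_bool (dn th Q0 (tgt t)) - of_bool (dn th Q0 (src t))"
  proof (cases "isfwd t")
    case True
    have tq: "t = (src t, tlab t, True, tgt t)" using True by (cases t) (simp add: src_def tgt_def tlab_def isfwd_def)
    have ft: "fwd (src t) (tlab t) (tgt t)" using path_cons.hyps(1) True unfolding is_trans_def by simp
    have nb: "t \<notin> ebar ?e"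
    proof
      assume "t \<in> ebar ?e"
      then have "sim ?t0 (tinv t)" using mem_ebar[OF t0] by simp
      then have "sigf ?t0 = sigf (tinv t)" by (rule I1)
      then show False using True by (simp add: sigf_def)
    qed
    show ?thesis
    proof (cases "sim ?t0 t")
      case True
      then have "\<not> dn th Q0 (src t) \<and> dn th Q0 (tgt t)" using Delta1[OF _ f0 ft] tq by metis
      moreover have "t \<in> ?e" using True unfolding cls_def by simp
      ultimately show ?thesis by simp
    next
      case False
      have FRs: "FR (src t)" using path_cons.prems path_cons.hyps(2) by simp
      have "dn th Q0 (src t) = dn th Q0 (tgt t)"
        using Delta2[OF FRs fp f0 ft] False tq by metis
      moreover have "t \<notin> ?e" using False unfolding cls_def by simp
      ultimately show ?thesis using nb by simp
    qed
  next
    case False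
    have tq: "tinv t = (tgt t, tlab t, True, src t)" using False by (simp add: tinv_def)
    have ft: "fwd (tgt t) (tlab t) (src t)" using path_cons.hyps(1) False unfolding is_trans_def by simp
    have ne: "t \<notin> ?e"
    proof
      assume "t \<in> ?e"
      then have "sim ?t0 t" unfolding cls_def by simp
      then have "sigf ?t0 = sigf t" by (rule I1)
      then show False using False by (simp add: sigf_def)
    qed
    have eb: "t \<in> ebar ?e \<longleftrightarrow> sim ?t0 (tinv t)" using mem_ebar[OF t0] .
    show ?thesis
    proof (cases "sim ?t0 (tinv t)")
      case True
      then have "\<not> dn th Q0 (tgt t) \<and> dn th Q0 (src t)" using Delta1[OF _ f0 ft] tq by metis
      then show ?thesis using ne eb True by simp
    next
      case False
      have "dn th Q0 (tgt t) = dn th Q0 (src t)"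
        using Delta2[OF FRt fp f0 ft] False tq by metis
      then show ?thesis using ne eb False by simp
    qed
  qed
  show ?case using IH c path_cons.hyps(2) by simp
qed

lemma sharp_nz: "sharp r e \<noteq> 0 \<Longrightarrow> \<exists>s\<in>set r. s \<in> e \<or> s \<in> ebar e"
  by (induction r) (auto split: if_splits)

lemma FR_member:
  assumes f0: "fwd P0 th Q0" and fp: "FR P0"
    and s: "s \<in> cls (P0,th,True,Q0) \<or> s \<in> ebar (cls (P0,th,True,Q0))"
  shows "FR (src s)"
proof -
  have t0: "is_trans (P0,th,True,Q0)" using f0 by (simp add: is_trans_quad)
  from s show ?thesis
  proof
    assume "s \<in> cls (P0,th,True,Q0)"
    then have "sim (P0,th,True,Q0) s" unfolding cls_def by simp
    then show ?thesis using sim_FR fp by fastforce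
  next
    assume "s \<in> ebar (cls (P0,th,True,Q0))"
    then have sm: "sim (P0,th,True,Q0) (tinv s)" using mem_ebar[OF t0] by simp
    then have "FR (tgt s)" using sim_FR[OF sm] fp by simp
    moreover have "is_trans s" using sim_is[OF sm] by simp
    ultimately show ?thesis using FR_trans by blast
  qed
qed

lemma not_dn_std: "keys P = {} \<Longrightarrow> \<not> dn th Q0 P"
  unfolding dn_def using k_in_dw by blast

lemma rep:
  assumes fx: "FR X" and e: "e \<in> ev X"
  shows "\<exists>P0 th Q0. fwd P0 th Q0 \<and> FR P0 \<and> e = cls (P0,th,True,Q0) \<and> dn th Q0 X"
proof -
  from e obtain t where t: "is_trans t" "isfwd t" "e = cls t"
    unfolding ev_def fwd_event_def by blast
  obtain P0 th b Q0 where tq: "t = (P0,th,b,Q0)" by (cases t)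
  then have b: "b" using t(2) by simp
  have f0: "fwd P0 th Q0" using t(1) tq b by (simp add: is_trans_quad)
  from e obtain P r where pr: "root P" "path P r X" "sharp r e > 0" unfolding ev_def by blast
  have FRP: "FR P" using path_FR[OF pr(2)] fx by simp
  from sharp_nz[of r e] pr(3) obtain s where s: "s \<in> set r" "s \<in> e \<or> s \<in> ebar e" by auto
  have FRs: "FR (src s)" using path_FR[OF pr(2)] FRP s(1) by simp
  have FP0: "FR P0"
  proof -
    from s(2) show ?thesis
    proof
      assume "s \<in> e"
      then have "sim t s" using t(3) unfolding cls_def by simp
      then show ?thesis using sim_FR FRs tq by fastforce
    next
      assume "s \<in> ebar e"
      moreover have "is_trans (P0,th,True,Q0)" using f0 by (simp add: is_trans_quad)
      ultimately have sm: "sim (P0,th,True,Q0) (tinv s)" using mem_ebar t(3) tq b by metis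
      have "is_trans s" using sim_is[OF sm] by simp
      then have "FR (tgt s)" using FRs FR_trans by blast
      then show ?thesis using sim_FR[OF sm] by simp
    qed
  qed
  have e0: "e = cls (P0,th,True,Q0)" using t(3) tq b by simp
  have "sharp r e = of_bool (dn th Q0 X) - of_bool (dn th Q0 P)"
    using sharp_dn[OF f0 FP0 pr(2) FRP] e0 by simp
  moreover have "\<not> dn th Q0 P" using not_dn_std root_FR[OF FRP pr(1)] by blast
  ultimately have "dn th Q0 X" using pr(3) by simp
  then show ?thesis using f0 FP0 e0 by blast
qed

lemma keyev: assumes f0: "fwd P0 th Q0" shows "key_ev (cls (P0,th,True,Q0)) = pkey th"
proof -
  have "(P0,th,True,Q0) \<in> cls (P0,th,True,Q0)" unfolding cls_def using f0
    by (simp add: sim_refl is_trans_quad)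
  then have "(SOME t. t \<in> cls (P0,th,True,Q0)) \<in> cls (P0,th,True,Q0)" by (rule someI)
  then have "sim (P0,th,True,Q0) (SOME t. t \<in> cls (P0,th,True,Q0))" unfolding cls_def by simp
  then have "sigf (P0,th,True,Q0) = sigf (SOME t. t \<in> cls (P0,th,True,Q0))" by (rule I1)
  then show ?thesis unfolding key_ev_def sigf_def by simp
qed

lemma reach_FR: "reachable X \<Longrightarrow> FR X"
  unfolding reachable_def standard_def using path_FR FR.FR_std by blast

theorem theorem6p15:
  fixes X :: "'n proc" and e1 e2 :: "'n trans set"
  assumes "reachable X" and "e1 \<in> ev X" and "e2 \<in> ev X"
  shows "ev_le e1 e2 \<longleftrightarrow> leX X (key_ev e1) (key_ev e2)"
proof -
  have fx: "FR X" using reach_FR assms(1) by blast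
  from rep[OF fx assms(2)] obtain P1 th1 Q1 where
    r1: "fwd P1 th1 Q1" "FR P1" "e1 = cls (P1,th1,True,Q1)" "dn th1 Q1 X" by blast
  from rep[OF fx assms(3)] obtain P2 th2 Q2 where
    r2: "fwd P2 th2 Q2" "FR P2" "e2 = cls (P2,th2,True,Q2)" "dn th2 Q2 X" by blast
  define k1 where "k1 = pkey th1"
  define k2 where "k2 = pkey th2"
  have ke1: "key_ev e1 = k1" using keyev[OF r1(1)] r1(3) k1_def by simp
  have ke2: "key_ev e2 = k2" using keyev[OF r2(1)] r2(3) k2_def by simp
  define K1 where "K1 = dw k1 Q1"
  define K2 where "K2 = dw k2 Q2"
  have K1X: "dw k1 X = K1" using dn_dw[OF r1(4)] K1_def k1_def by simp
  have K2X: "dw k2 X = K2" using dn_dw[OF r2(4)] K2_def k2_def by simp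
  have dn1: "K1 \<subseteq> keys X" "dc K1 (ord X)" "proj K1 X = proj K1 Q1"
    using r1(4) unfolding dn_def K1_def k1_def by auto
  have dn2: "K2 \<subseteq> keys X" "dc K2 (ord X)" "proj K2 X = proj K2 Q2"
    using r2(4) unfolding dn_def K2_def k2_def by auto
  have dnI: "\<And>Z. dn th1 Q1 Z \<longleftrightarrow> K1 \<subseteq> keys Z \<and> dc K1 (ord Z) \<and> proj K1 Z = proj K1 X"
    unfolding dn_def K1_def k1_def using dn1 K1_def k1_def by auto
  have dnI2: "\<And>Z. dn th2 Q2 Z \<longleftrightarrow> K2 \<subseteq> keys Z \<and> dc K2 (ord Z) \<and> proj K2 Z = proj K2 X"
    unfolding dn_def K2_def k2_def using dn2 K2_def k2_def by auto
  have k1K: "k1 \<in> K1" "k2 \<in> K2" using k_in_dw K1_def K2_def by auto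
  show ?thesis
  proof
    assume le: "ev_le e1 e2"
    let ?Z = "proj K2 X"
    have dcX: "dc K2 (ord X)" using dn2(2) .
    have FZ: "FR ?Z" using FR_proj[OF fx dcX] .
    from FR_path[OF FZ] obtain S r where Sr: "keys S = {}" "path S r ?Z" by blast
    have FS: "FR S" using Sr(1) by (rule FR.FR_std)
    have keysZ: "keys ?Z = K2" using keys_proj_dc[OF dcX] dn2(1) by auto
    have "dn th2 Q2 ?Z"
      unfolding dnI2
    proof (intro conjI)
      show "K2 \<subseteq> keys ?Z" using keysZ by simp
      show "dc K2 (ord ?Z)" using ord_proj_dc[OF dcX] unfolding dc_def by auto
      show "proj K2 ?Z = proj K2 X" using proj_proj[of K2 K2 X] by simp
    qed
    then have "sharp r e2 = 1"
      using sharp_dn[OF r2(1) r2(2) Sr(2) FS] not_dn_std[OF Sr(1)] r2(3) by simp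
    then have "sharp r e1 > 0" using le std_root[OF Sr(1)] Sr(2) unfolding ev_le_def by (metis zero_less_one)
    then have "dn th1 Q1 ?Z"
      using sharp_dn[OF r1(1) r1(2) Sr(2) FS] not_dn_std[OF Sr(1)] r1(3) by (auto split: if_splits)
    then have "K1 \<subseteq> K2" using dnI keysZ by auto
    then have "k1 \<in> dw k2 X" using k1K K2X by auto
    then have "(k1,k2) \<in> (ord X)\<^sup>*" unfolding dw_def by simp
    moreover have "k1 \<in> keys X" "k2 \<in> keys X" using k1K dn1(1) dn2(1) by auto
    ultimately show "leX X (key_ev e1) (key_ev e2)" unfolding leX_def ke1 ke2 by simp
  next
    assume "leX X (key_ev e1) (key_ev e2)"
    then have kk: "(k1,k2) \<in> (ord X)\<^sup>*" unfolding leX_def ke1 ke2 by simp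
    have K12: "K1 \<subseteq> K2"
    proof
      fix x assume "x \<in> K1"
      then have "(x,k1) \<in> (ord X)\<^sup>*" using K1X unfolding dw_def by auto
      then have "(x,k2) \<in> (ord X)\<^sup>*" using kk by simp
      then show "x \<in> K2" using K2X unfolding dw_def by auto
    qed
    have DN: "\<And>Z. dn th2 Q2 Z \<Longrightarrow> dn th1 Q1 Z"
    proof -
      fix Z assume "dn th2 Q2 Z"
      then have z: "K2 \<subseteq> keys Z" "dc K2 (ord Z)" "proj K2 Z = proj K2 X" using dnI2 by auto
      have oZ: "ord (proj K2 Z) = ord (proj K2 X)" using z(3) by simp
      show "dn th1 Q1 Z"
        unfolding dnI
      proof (intro conjI)
        show "K1 \<subseteq> keys Z" using K12 z(1) by auto
        show "dc K1 (ord Z)" unfolding dc_def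
        proof (intro allI impI)
          fix a b assume ab: "(a,b) \<in> ord Z" "b \<in> K1"
          then have "a \<in> K2" using z(2) K12 unfolding dc_def by blast
          then have "(a,b) \<in> ord (proj K2 Z)" using ab K12 ord_proj_dc[OF z(2)] by auto
          then have "(a,b) \<in> ord X" using oZ ord_proj_dc[OF dn2(2)] by auto
          then show "a \<in> K1" using dn1(2) ab(2) unfolding dc_def by blast
        qed
        have "K1 \<inter> K2 = K1" using K12 by auto
        then show "proj K1 Z = proj K1 X"
          using proj_proj[of K1 K2 Z] proj_proj[of K1 K2 X] z(3) by metis
      qed
    qed
    show "ev_le e1 e2"
      unfolding ev_le_def
    proof (intro allI impI)
      fix P r Q assume a: "root P \<and> path P r Q \<and> 0 < sharp r e2"
      then obtain s where s: "s \<in> set r" "s \<in> e2 \<or> s \<in> ebar e2" using sharp_nz[of r e2] by auto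
      have "FR (src s)" using FR_member[OF r2(1) r2(2)] s(2) r2(3) by simp
      then have FP: "FR P" using path_FR[of P r Q] a s(1) by auto
      have std: "keys P = {}" using root_FR[OF FP] a by simp
      have "sharp r e2 = of_bool (dn th2 Q2 Q)"
        using sharp_dn[OF r2(1) r2(2) _ FP, of r Q] a not_dn_std[OF std] r2(3) by simp
      then have "dn th2 Q2 Q" using a by (auto split: if_splits)
      then have "dn th1 Q1 Q" by (rule DN)
      then have "sharp r e1 = 1"
        using sharp_dn[OF r1(1) r1(2) _ FP, of r Q] a not_dn_std[OF std] r1(3) by simp
      then show "0 < sharp r e1" by simp
    qed
  qed
qed

end
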